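(* Suppose that $K$ is algebraically closed and its residue class field $k$ has characteristic $p>0$. Then the set of equivalence classes of $K^\vee\setminus K$ under the relation $\sim$ is infinite.
   Context: $K$ is a complete non-archimedean non-trivially valued field which is not spherically complete; $K^\vee$ is a fixed spherically complete valued field which is an immediate extension of $K$. For $x,y\in K^\vee\setminus K$, $x\sim y$ means there exist $\lambda,\mu\in K$ with $|\lambda x+\mu-y|\le d(y,K)$, where $d(y,K)=\inf_{a\in K}|y-a|$; this is an equivalence relation on $K^\vee\setminus K$. *)

theory Defs
  imports "HOL-Computational_Algebra.Polynomial"
begin

definition nonarch_abs :: "('b::field \<Rightarrow> real) \<Rightarrow> bool" where
  "nonarch_abs v \<longleftrightarrow>
     (\<forall>x. v x \<ge> 0) \<and> (\<forall>x. v x = 0 \<longleftrightarrow> x = 0) \<and>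
     (\<forall>x y. v (x * y) = v x * v y) \<and> (\<forall>x y. v (x + y) \<le> max (v x) (v y))"

definition subfield :: "'b::field set \<Rightarrow> bool" where
  "subfield K \<longleftrightarrow> 0 \<in> K \<and> 1 \<in> K \<and>
     (\<forall>x\<in>K. \<forall>y\<in>K. x + y \<in> K \<and> x * y \<in> K) \<and>
     (\<forall>x\<in>K. - x \<in> K \<and> inverse x \<in> K)"

definition vball :: "('b::field \<Rightarrow> real) \<Rightarrow> 'b \<Rightarrow> real \<Rightarrow> 'b set" where
  "vball v c r = {y. v (y - c) \<le> r}"

definition spherically_complete :: "('b::field \<Rightarrow> real) \<Rightarrow> 'b set \<Rightarrow> bool" where
  "spherically_complete v S \<longleftrightarrow>
     (\<forall>F. F \<noteq> {} \<and> F \<subseteq> {S \<inter> vball v c r | c r. c \<in> S \<and> r > 0} \<and>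
          (\<forall>B\<in>F. \<forall>B'\<in>F. B \<subseteq> B' \<or> B' \<subseteq> B) \<longrightarrow> \<Inter>F \<noteq> {})"

definition vcomplete :: "('b::field \<Rightarrow> real) \<Rightarrow> 'b set \<Rightarrow> bool" where
  "vcomplete v S \<longleftrightarrow>
     (\<forall>f. (\<forall>n. f n \<in> S) \<and> (\<forall>e>0. \<exists>N. \<forall>m\<ge>N. \<forall>n\<ge>N. v (f m - f n) < e) \<longrightarrow>
          (\<exists>a\<in>S. (\<lambda>n. v (f n - a)) \<longlonglongrightarrow> 0))"

definition nontrivially_valued :: "('b::field \<Rightarrow> real) \<Rightarrow> 'b set \<Rightarrow> bool" where
  "nontrivially_valued v K \<longleftrightarrow> (\<exists>x\<in>K. x \<noteq> 0 \<and> v x \<noteq> 1)"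

text \<open>The whole field (UNIV) is an immediate extension of the subfield K:
  same value group and same residue class field.\<close>
definition immediate_ext :: "('b::field \<Rightarrow> real) \<Rightarrow> 'b set \<Rightarrow> bool" where
  "immediate_ext v K \<longleftrightarrow>
     v ` (UNIV - {0}) = v ` (K - {0}) \<and>
     (\<forall>x. v x \<le> 1 \<longrightarrow> (\<exists>a\<in>K. v (x - a) < 1))"

definition alg_closed_subfield :: "'b::field set \<Rightarrow> bool" where
  "alg_closed_subfield K \<longleftrightarrow>
     (\<forall>p :: 'b poly. degree p > 0 \<and> (\<forall>i. coeff p i \<in> K) \<longrightarrow> (\<exists>x\<in>K. poly p x = 0))"

text \<open>Characteristic of the residue class field of K: n*1 = 0 in the residue field
  iff v(n*1) < 1.\<close>
definition residue_char :: "('b::field \<Rightarrow> real) \<Rightarrow> nat" where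
  "residue_char v = (if \<exists>n>0. v (of_nat n) < 1 then (LEAST n. n > 0 \<and> v (of_nat n) < 1) else 0)"

definition dist_to :: "('b::field \<Rightarrow> real) \<Rightarrow> 'b \<Rightarrow> 'b set \<Rightarrow> real" where
  "dist_to v y K = (INF a\<in>K. v (y - a))"

definition sim_rel :: "('b::field \<Rightarrow> real) \<Rightarrow> 'b set \<Rightarrow> 'b \<Rightarrow> 'b \<Rightarrow> bool" where
  "sim_rel v K x y \<longleftrightarrow> (\<exists>l\<in>K. \<exists>m\<in>K. v (l * x + m - y) \<le> dist_to v y K)"

end

theory Submission
  imports Defs "HOL-Computational_Algebra.Primes"
begin


locale vf =
  fixes v :: "'b::field \<Rightarrow> real" and K :: "'b set"
  assumes na: "nonarch_abs v" and sf: "subfield K"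
begin

lemma v_nonneg[simp]: "v x \<ge> 0" using na unfolding nonarch_abs_def by auto
lemma v_eq0[simp]: "v x = 0 \<longleftrightarrow> x = 0" using na unfolding nonarch_abs_def by auto
lemma v_mult: "v (x * y) = v x * v y" using na unfolding nonarch_abs_def by auto
lemma v_add: "v (x + y) \<le> max (v x) (v y)" using na unfolding nonarch_abs_def by auto
lemma v_0[simp]: "v 0 = 0" by simp
lemma v_1[simp]: "v 1 = 1"
proof -
  have "v 1 = v 1 * v 1" using v_mult[of 1 1] by simp
  moreover have "v 1 \<noteq> 0" by simp
  ultimately show ?thesis by (metis mult_cancel_right1)
qed
lemma v_pos: "x \<noteq> 0 \<Longrightarrow> v x > 0" using v_nonneg[of x] v_eq0[of x] by linarith
lemma v_uminus[simp]: "v (- x) = v x"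
proof -
  have "v (-1) * v (-1) = 1" using v_mult[of "-1" "-1"] by simp
  hence "v (-1) = 1" using v_nonneg[of "-1"]
    by (metis mult_cancel_right1 mult_le_cancel_left1 mult_less_cancel_right1 nle_le not_one_le_zero order_less_le)
  thus ?thesis using v_mult[of "-1" x] by simp
qed
lemma v_sym: "v (x - y) = v (y - x)" by (metis minus_diff_eq v_uminus)
lemma v_diff: "v (x - y) \<le> max (v x) (v y)" using v_add[of x "-y"] by simp
lemma v_power: "v (x ^ n) = v x ^ n" by (induct n) (auto simp: v_mult)
lemma v_inverse: "v (inverse x) = inverse (v x)"
proof (cases "x = 0")
  case False
  have "v x * v (inverse x) = 1" using v_mult[of x "inverse x"] False by simp
  thus ?thesis using v_pos[OF False] by (metis inverse_unique)
qed simp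
lemma v_divide: "v (x / y) = v x / v y" by (simp add: divide_inverse v_mult v_inverse)
lemma v_iso: assumes "v y < v x" shows "v (x + y) = v x"
proof -
  have "v (x + y) \<le> v x" using v_add[of x y] assms by simp
  moreover have "v x \<le> max (v (x + y)) (v y)" using v_add[of "x+y" "-y"] by simp
  ultimately show ?thesis using assms by linarith
qed
lemma v_tri: "v (x - z) \<le> max (v (x - y)) (v (y - z))"
  using v_add[of "x - y" "y - z"] by simp
lemma v_sum: assumes "\<And>i. i \<in> A \<Longrightarrow> v (f i) \<le> M" "M \<ge> 0" shows "v (sum f A) \<le> M"
  using assms
proof (induct A rule: infinite_finite_induct)
  case (insert x F)
  hence "v (f x) \<le> M" "v (sum f F) \<le> M" by auto
  then show ?case using v_add[of "f x" "sum f F"] insert(1,2) by simp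
qed auto
lemma v_prod: "v (prod f A) = (\<Prod>i\<in>A. v (f i))"
  by (induct A rule: infinite_finite_induct) (auto simp: v_mult)
lemma v_nat_le1: "v (of_nat n) \<le> 1"
proof (induct n)
  case (Suc n) then show ?case using v_add[of 1 "of_nat n"] by simp
qed simp

lemma K0: "0 \<in> K" and K1: "1 \<in> K" and Kadd: "x \<in> K \<Longrightarrow> y \<in> K \<Longrightarrow> x + y \<in> K"
  and Kmult: "x \<in> K \<Longrightarrow> y \<in> K \<Longrightarrow> x * y \<in> K" and Kuminus: "x \<in> K \<Longrightarrow> -x \<in> K"
  and Kinv: "x \<in> K \<Longrightarrow> inverse x \<in> K"
  using sf unfolding subfield_def by auto
lemma Kdiff: "x \<in> K \<Longrightarrow> y \<in> K \<Longrightarrow> x - y \<in> K" using Kadd Kuminus by (metis diff_conv_add_uminus)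
lemma Kdivide: "x \<in> K \<Longrightarrow> y \<in> K \<Longrightarrow> x / y \<in> K" using Kmult Kinv by (simp add: divide_inverse)
lemma Kpower: "x \<in> K \<Longrightarrow> x ^ n \<in> K" by (induct n) (auto simp: K1 Kmult)
lemma Knat: "of_nat n \<in> K" by (induct n) (auto simp: K0 K1 Kadd)
lemma Ksum: "(\<And>i. i \<in> A \<Longrightarrow> f i \<in> K) \<Longrightarrow> sum f A \<in> K"
  by (induct A rule: infinite_finite_induct) (auto simp: K0 Kadd)
lemma Kprod: "(\<And>i. i \<in> A \<Longrightarrow> f i \<in> K) \<Longrightarrow> prod f A \<in> K"
  by (induct A rule: infinite_finite_induct) (auto simp: K1 Kmult)

definition d where "d x = dist_to v x K"

lemma Kne: "K \<noteq> {}" using K0 by auto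
lemma bdd: "bdd_below ((\<lambda>a. v (x - a)) ` K)" by (rule bdd_belowI[of _ 0]) auto

lemma d_le: "a \<in> K \<Longrightarrow> d x \<le> v (x - a)"
  unfolding d_def dist_to_def by (rule cINF_lower[OF bdd])
lemma d_ge: "(\<And>a. a \<in> K \<Longrightarrow> c \<le> v (x - a)) \<Longrightarrow> c \<le> d x"
  unfolding d_def dist_to_def using Kne by (rule cINF_greatest)
lemma d_nonneg: "d x \<ge> 0" by (rule d_ge) auto
lemma d_approx: assumes "e > 0" shows "\<exists>a\<in>K. v (x - a) < d x + e"
proof (rule ccontr)
  assume "\<not> ?thesis"
  hence "d x + e \<le> d x" by (intro d_ge) (auto simp: not_less)
  thus False using assms by simp
qed
lemma d_eqI: assumes "\<And>a. a \<in> K \<Longrightarrow> c \<le> v (x - a)" "\<And>e. e > 0 \<Longrightarrow> \<exists>a\<in>K. v (x - a) < c + e"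
  shows "d x = c"
proof -
  have "c \<le> d x" using assms(1) by (rule d_ge)
  moreover have "d x \<le> c"
  proof (rule ccontr)
    assume "\<not> d x \<le> c"
    then obtain a where "a \<in> K" "v (x - a) < c + (d x - c)" using assms(2)[of "d x - c"] by auto
    thus False using d_le[of a x] by simp
  qed
  ultimately show ?thesis by simp
qed
lemma d_K: "x \<in> K \<Longrightarrow> d x = 0"
  using d_le[of x x] d_nonneg[of x] by simp
lemma d_add_K: assumes "m \<in> K" shows "d (x + m) = d x"
proof (rule d_eqI)
  fix a assume "a \<in> K" thus "d x \<le> v (x + m - a)" using d_le[of "a - m" x] Kdiff[OF _ assms] by (simp add: algebra_simps)
next
  fix e :: real assume "e > 0"
  then obtain a where "a \<in> K" "v (x - a) < d x + e" using d_approx by blast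
  thus "\<exists>a\<in>K. v (x + m - a) < d x + e" by (intro bexI[of _ "a + m"]) (auto simp: Kadd assms)
qed
lemma d_scale: assumes "c \<in> K" shows "d (c * x) = v c * d x"
proof (cases "c = 0")
  case True thus ?thesis using d_K[OF K0] by simp
next
  case False
  show ?thesis
  proof (rule d_eqI)
    fix a assume "a \<in> K"
    have "c * x - a = c * (x - a / c)" using False by (simp add: field_simps)
    hence "v (c * x - a) = v c * v (x - a / c)" by (simp add: v_mult)
    thus "v c * d x \<le> v (c * x - a)" using d_le[of "a / c" x] Kdivide[OF \<open>a \<in> K\<close> assms]
      by (simp add: mult_left_mono)
  next
    fix e :: real assume "e > 0"
    hence "e / v c > 0" using v_pos[OF False] by (intro divide_pos_pos)
    then obtain a where a: "a \<in> K" "v (x - a) < d x + e / v c" using d_approx by blast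
    have "v (c * x - c * a) = v c * v (x - a)" by (metis right_diff_distrib v_mult)
    also have "\<dots> < v c * (d x + e / v c)" using a v_pos[OF False] by simp
    also have "\<dots> = v c * d x + e" using False by (simp add: distrib_left)
    finally show "\<exists>a\<in>K. v (c * x - a) < v c * d x + e" using Kmult[OF assms a(1)] by blast
  qed
qed
lemma d_sum: "d (x + y) \<le> max (d x) (d y)"
proof (rule ccontr)
  assume "\<not> ?thesis"
  define e where "e = d (x + y) - max (d x) (d y)"
  have e: "e > 0" using \<open>\<not> _\<close> unfolding e_def by linarith
  obtain a where a: "a \<in> K" "v (x - a) < d x + e" using d_approx[OF e] by blast
  obtain b where b: "b \<in> K" "v (y - b) < d y + e" using d_approx[OF e] by blast
  have "d (x + y) \<le> v (x + y - (a + b))" using d_le[OF Kadd[OF a(1) b(1)]] .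
  also have "\<dots> \<le> max (v (x - a)) (v (y - b))" using v_add[of "x - a" "y - b"] by (simp add: algebra_simps)
  also have "\<dots> < max (d x) (d y) + e" using a b by auto
  finally show False unfolding e_def by simp
qed
lemma d_neg: "d (- x) = d x" using d_scale[OF Kuminus[OF K1], of x] by simp
lemma d_diff: "d (x - y) \<le> max (d x) (d y)" using d_sum[of x "-y"] d_neg[of y] by simp

end



locale vf2 = vf +
  assumes imm: "immediate_ext v K" and comp: "vcomplete v K" and acl: "alg_closed_subfield K"
begin

lemma nonattain: assumes "x \<notin> K" "m \<in> K" shows "d x < v (x - m)"
proof (rule ccontr)
  assume "\<not> ?thesis"
  hence eq: "v (x - m) = d x" using d_le[OF assms(2), of x] by linarith
  have nz: "x - m \<noteq> 0" using assms by auto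
  have imm1: "v ` (UNIV - {0}) = v ` (K - {0})" and imm2: "\<And>x. v x \<le> 1 \<Longrightarrow> (\<exists>a\<in>K. v (x - a) < 1)"
    using imm unfolding immediate_ext_def by auto
  have "v (x - m) \<in> v ` (UNIV - {0})" using nz by auto
  hence "v (x - m) \<in> v ` (K - {0})" using imm1 by simp
  then obtain c where c: "c \<in> K" "c \<noteq> 0" "v c = v (x - m)" by (metis DiffE image_iff singletonI)
  have "v ((x - m) / c) \<le> 1" using c by (simp add: v_divide)
  then obtain a where a: "a \<in> K" "v ((x - m) / c - a) < 1" using imm2 by blast
  have "(x - m) / c - a = (x - (m + a * c)) / c" using c(2) by (simp add: field_simps)
  hence "v (x - (m + a * c)) / v c < 1" using a(2) by (simp add: v_divide)
  hence "v (x - (m + a * c)) < v c" using v_pos[OF c(2)] by (simp add: divide_less_eq)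
  moreover have "d x \<le> v (x - (m + a * c))" using d_le Kadd Kmult a(1) c(1) assms(2) by blast
  ultimately show False using c(3) eq by simp
qed

lemma d_pos: assumes "x \<notin> K" shows "d x > 0"
proof (rule ccontr)
  assume "\<not> ?thesis"
  hence d0: "d x = 0" using d_nonneg[of x] by simp
  have "\<forall>n. \<exists>a\<in>K. v (x - a) < 1 / (real n + 1)" using d_approx[of "1 / (real _ + 1)" x] d0 by simp
  then obtain f where f: "\<And>n. f n \<in> K" "\<And>n. v (x - f n) < 1 / (real n + 1)" by metis
  have "\<exists>N. \<forall>m\<ge>N. \<forall>n\<ge>N. v (f m - f n) < e" if e: "e > 0" for e
  proof -
    obtain N :: nat where N: "1 / e < real N" using reals_Archimedean2 by blast
    have "1 / (real N + 1) < e" using N e by (simp add: divide_less_eq field_simps) 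
    moreover have "v (x - f n) < 1 / (real N + 1)" if "n \<ge> N" for n
    proof -
      have "1/(real n+1) \<le> 1/(real N+1)" by (intro divide_left_mono) (use that in auto)
      thus ?thesis using f(2)[of n] by linarith
    qed
    ultimately have "\<forall>m\<ge>N. \<forall>n\<ge>N. v (f m - f n) < e"
    proof (intro allI impI)
      fix m n assume "m \<ge> N" "n \<ge> N"
      have t1: "v (f m - f n) \<le> max (v (f m - x)) (v (x - f n))" by (rule v_tri)
      have t2: "v (f m - x) = v (x - f m)" by (rule v_sym)
      show "v (f m - f n) < e" using \<open>m \<ge> N\<close> \<open>n \<ge> N\<close> t1 t2
        \<open>1 / (real N + 1) < e\<close> \<open>\<And>n. n \<ge> N \<Longrightarrow> v (x - f n) < 1 / (real N + 1)\<close>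
        by (smt (verit))
    qed
    thus ?thesis by blast
  qed
  then obtain a where a: "a \<in> K" "(\<lambda>n. v (f n - a)) \<longlonglongrightarrow> 0" using comp f(1) unfolding vcomplete_def by blast
  have "v (x - a) < e" if e: "e > 0" for e
  proof -
    obtain N1 where N1: "\<forall>n\<ge>N1. v (f n - a) < e" using a(2) e
      by (metis (no_types, lifting) LIMSEQ_D abs_of_nonneg diff_zero real_norm_def v_nonneg)
    obtain N :: nat where N: "1 / e < real N" using reals_Archimedean2 by blast
    have "1 / (real N + 1) < e" using N e by (simp add: divide_less_eq field_simps) 
    have "1/(real (max N N1)+1) \<le> 1/(real N+1)" by (intro divide_left_mono) auto
    hence "v (x - f (max N N1)) < e" using f(2)[of "max N N1"] \<open>1 / (real N + 1) < e\<close> by linarith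
    moreover have "v (f (max N N1) - a) < e" using N1 by simp
    ultimately show ?thesis using v_tri[of x a "f (max N N1)"] by linarith
  qed
  hence "v (x - a) \<le> 0" by (metis less_irrefl not_le)
  hence "x = a" using v_nonneg[of "x - a"] by simp
  thus False using a(1) assms by simp
qed

definition inK where "inK p \<longleftrightarrow> (\<forall>i. coeff p i \<in> K)"

lemma inK_pCons[simp]: "inK (pCons a p) \<longleftrightarrow> a \<in> K \<and> inK p"
  unfolding inK_def by (auto simp: coeff_pCons split: nat.splits)
lemma inK_0[simp]: "inK 0" unfolding inK_def by (simp add: K0)
lemma inK_1[simp]: "inK 1" by (simp add: one_pCons K1)
lemma inK_const: "c \<in> K \<Longrightarrow> inK [:c:]" by simp
lemma inK_add: "inK p \<Longrightarrow> inK q \<Longrightarrow> inK (p + q)" unfolding inK_def by (simp add: Kadd)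
lemma inK_uminus: "inK p \<Longrightarrow> inK (- p)" unfolding inK_def by (simp add: Kuminus)
lemma inK_diff: "inK p \<Longrightarrow> inK q \<Longrightarrow> inK (p - q)" unfolding inK_def by (simp add: Kdiff)
lemma inK_mult: "inK p \<Longrightarrow> inK q \<Longrightarrow> inK (p * q)" unfolding inK_def coeff_mult
  by (intro allI Ksum) (simp add: Kmult)
lemma inK_monom: "c \<in> K \<Longrightarrow> inK (monom c n)" unfolding inK_def using K0 by (simp add: coeff_monom)
lemma inK_prod: "(\<And>i. i \<in> A \<Longrightarrow> inK (f i)) \<Longrightarrow> inK (prod f A)"
  by (induct A rule: infinite_finite_induct) (auto simp: inK_mult K1)
lemma poly_inK: "inK p \<Longrightarrow> c \<in> K \<Longrightarrow> poly p c \<in> K"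
  by (induct p) (auto simp: Kadd Kmult K0)
lemma synth_inK: "inK p \<Longrightarrow> c \<in> K \<Longrightarrow> inK (synthetic_div p c)"
  by (induct p) (auto simp: poly_inK)

lemma root_ex: "inK p \<Longrightarrow> degree p > 0 \<Longrightarrow> \<exists>x\<in>K. poly p x = 0"
  using acl unfolding alg_closed_subfield_def inK_def by blast

lemma monic_bound: "inK f \<Longrightarrow> lead_coeff f = 1 \<Longrightarrow> d x ^ degree f \<le> v (poly f x)"
proof (induct "degree f" arbitrary: f)
  case 0
  then have "f = [:1:]" by (metis leading_coeff_0_iff degree_eq_zeroE coeff_pCons_0 pCons_0_0 zero_neq_one)
  then show ?case using 0 by simp
next
  case (Suc n)
  obtain b where b: "b \<in> K" "poly f b = 0" using root_ex[OF Suc(3)] Suc(2) by auto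
  define g where "g = synthetic_div f b"
  have fg: "f = [:-b, 1:] * g" using synthetic_div_correct'[of b f] b(2) unfolding g_def by simp
  have g: "inK g" unfolding g_def using synth_inK Suc(3) b(1) by blast
  have dg: "degree g = n" unfolding g_def degree_synthetic_div using Suc(2) by simp
  have lg: "lead_coeff g = 1" using Suc(4) fg by (metis lead_coeff_mult lead_coeff_pCons(1) mult_1 one_neq_zero pCons_one)
  have IH: "d x ^ n \<le> v (poly g x)" using Suc(1)[of g] g lg dg by simp
  have "poly f x = (x - b) * poly g x" by (subst fg) (simp add: algebra_simps)
  hence "v (poly f x) = v (x - b) * v (poly g x)" by (simp add: v_mult)
  moreover have "d x \<le> v (x - b)" using d_le[OF b(1)] .
  ultimately show ?case using IH Suc(2)[symmetric] d_nonneg[of x]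
    by (simp add: mult_mono del: v_eq0)
qed

lemma root_N: assumes "N > 0" "c \<in> K" shows "\<exists>h\<in>K. h ^ N = c"
proof -
  have "inK (monom 1 N + [:-c:])" using assms by (intro inK_add inK_monom inK_const) (auto simp: K1 Kuminus)
  moreover have "degree (monom 1 N + [:-c:]) = N" using assms(1)
    by (subst degree_add_eq_left) (auto simp: degree_monom_eq)
  ultimately obtain h where "h \<in> K" "poly (monom 1 N + [:-c:]) h = 0" using root_ex assms by force
  thus ?thesis by (auto simp: poly_monom)
qed

end



locale vf3 = vf2 +
  assumes rc: "residue_char v > 0"
begin

definition p where "p = residue_char v"

lemma p_props: "p > 0" "v (of_nat p) < 1" "\<And>n. 0 < n \<Longrightarrow> n < p \<Longrightarrow> v (of_nat n) = 1"
proof -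
  have ex: "\<exists>n>0. v (of_nat n) < 1" using rc unfolding residue_char_def by (auto split: if_splits)
  have pd: "p = (LEAST n. n > 0 \<and> v (of_nat n) < 1)" unfolding p_def residue_char_def using ex by simp
  have "p > 0 \<and> v (of_nat p) < 1" unfolding pd using ex by (rule LeastI_ex)
  thus "p > 0" "v (of_nat p) < 1" by auto
  fix n :: nat assume "0 < n" "n < p"
  hence "\<not> (n > 0 \<and> v (of_nat n) < 1)" unfolding pd using not_less_Least by blast
  thus "v (of_nat n) = 1" using \<open>0 < n\<close> v_nat_le1[of n] by simp
qed

lemma p_ge2: "p \<ge> 2"
proof -
  have "p \<noteq> 1" using p_props(2) by auto
  thus ?thesis using p_props(1) by linarith
qed

lemma p_prime: "prime p"
proof -
  have "m = 1 \<or> m = p" if md: "m dvd p" for m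
  proof (rule ccontr)
    assume nt: "\<not> (m = 1 \<or> m = p)"
    obtain k where k: "p = m * k" using md unfolding dvd_def by blast
    have "m > 0" "k > 0" using k p_props(1) by (auto intro: Nat.gr0I)
    have "m < p" using dvd_imp_le[OF md p_props(1)] nt by simp
    have "k \<noteq> 1" using k nt by auto
    hence "k < p" using k \<open>m > 0\<close> nt
      by (metis One_nat_def Suc_lessI mult.right_neutral nat_mult_less_cancel_disj \<open>k > 0\<close> less_one mult.commute)
    have "v (of_nat p) = v (of_nat m) * v (of_nat k)" unfolding k by (simp add: v_mult)
    also have "\<dots> = 1" using p_props(3)[OF \<open>m > 0\<close> \<open>m < p\<close>] p_props(3)[OF \<open>k > 0\<close> \<open>k < p\<close>] by simp
    finally show False using p_props(2) by simp
  qed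
  thus ?thesis using p_ge2 by (simp add: prime_nat_iff)
qed

lemma v_choose: assumes "0 < k" "k < p" shows "v (of_nat (p choose k)) \<le> v (of_nat p)"
proof -
  have "p dvd (p choose k)" using dvd_choose_prime[OF assms(2)] assms p_prime by auto
  then obtain m where "p choose k = p * m" unfolding dvd_def by blast
  hence "v (of_nat (p choose k)) = v (of_nat p) * v (of_nat m)" by (simp add: v_mult)
  thus ?thesis using v_nat_le1[of m] v_nonneg[of "of_nat p"] by (simp add: mult_left_le)
qed

lemma powp_lower: assumes "l \<in> K" "b \<in> K" shows "d x ^ p \<le> v (x ^ p - l * x - b)"
proof -
  define f where "f = monom 1 p + [:-b, -l:]"
  have "inK f" unfolding f_def using assms by (intro inK_add inK_monom) (auto simp: K1 Kuminus)
  moreover have "degree f = p" unfolding f_def using p_ge2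
    by (subst degree_add_eq_left) (auto simp: degree_monom_eq)
  moreover have "lead_coeff f = 1" using \<open>degree f = p\<close> p_ge2 unfolding f_def
    by (auto simp: coeff_monom coeff_pCons split: nat.splits)
  ultimately have "d x ^ p \<le> v (poly f x)" using monic_bound by metis
  moreover have "poly f x = x ^ p - l * x - b" unfolding f_def by (simp add: poly_monom algebra_simps)
  ultimately show ?thesis by simp
qed

lemma powp_d: assumes "l \<in> K" shows "d x ^ p \<le> d (x ^ p - l * x)"
proof (rule d_ge)
  fix a assume "a \<in> K"
  from powp_lower[OF assms this, of x] show "d x ^ p \<le> v (x ^ p - l * x - a)" .
qed

end



context vf3
begin

lemma binom_bound:
  assumes vt: "v t = s" and va: "v a \<le> s0" and ss: "s \<le> s0"
    and key: "v (of_nat p) * s0 ^ (p - 1) \<le> s ^ (p - 1)"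
  shows "v ((a + t) ^ p - a ^ p) \<le> s ^ p"
proof -
  define f where "f k = of_nat (p choose k) * t ^ k * a ^ (p - k)" for k
  have "(a + t) ^ p = (\<Sum>k\<le>p. f k)" unfolding f_def using binomial_ring[of t a p] by (simp add: add.commute)
  also have "\<dots> = f 0 + (\<Sum>i<p. f (Suc i))" by (rule sum.atMost_shift)
  also have "f 0 = a ^ p" unfolding f_def by simp
  finally have eq: "(a + t) ^ p - a ^ p = (\<Sum>i<p. f (Suc i))" by simp
  have s0: "s \<ge> 0" using vt v_nonneg[of t] by simp
  have "v (f (Suc i)) \<le> s ^ p" if "i < p" for i
  proof (cases "Suc i = p")
    case True
    thus ?thesis unfolding f_def using vt by (simp add: v_mult v_power)
  next
    case False
    define k where "k = Suc i"
    have k: "0 < k" "k < p" using False that unfolding k_def by auto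
    have vf: "v (f k) = v (of_nat (p choose k)) * s ^ k * v a ^ (p - k)" unfolding f_def using vt by (simp add: v_mult v_power)
    have "v (f k) \<le> v (of_nat p) * s ^ k * s0 ^ (p - k)"
      unfolding vf by (intro mult_mono v_choose k power_mono va) (use s0 in auto)
    also have "s ^ k = s * s ^ (k - 1)" using k by (metis Suc_diff_1 power_Suc)
    also have "s ^ (k - 1) \<le> s0 ^ (k - 1)" using ss s0 by (rule power_mono)
    hence "v (of_nat p) * (s * s ^ (k - 1)) * s0 ^ (p - k) \<le> v (of_nat p) * (s * s0 ^ (k - 1)) * s0 ^ (p - k)"
      using s0 ss by (intro mult_right_mono mult_left_mono) auto
    also have "s0 ^ (k - 1) * s0 ^ (p - k) = s0 ^ (p - 1)" using k by (simp flip: power_add)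
    hence "v (of_nat p) * (s * s0 ^ (k - 1)) * s0 ^ (p - k) = s * (v (of_nat p) * s0 ^ (p - 1))"
      by (simp add: algebra_simps)
    also have "\<dots> \<le> s * s ^ (p - 1)" using key s0 by (rule mult_left_mono)
    also have "\<dots> = s ^ p" using p_ge2 by (metis Suc_diff_1 less_le_trans pos2 power_Suc)
    finally show ?thesis unfolding k_def .
  qed
  hence "v (\<Sum>i<p. f (Suc i)) \<le> s ^ p" using s0 by (intro v_sum) auto
  thus ?thesis using eq by simp
qed


lemma S_lemma: assumes "w \<notin> K" shows "\<exists>u. u \<notin> K \<and> d u = d w \<and> d (u ^ p) = d w ^ p"
proof -
  define \<rho> where "\<rho> = d w"
  have \<rho>: "\<rho> > 0" unfolding \<rho>_def using d_pos[OF assms] .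
  define q where "q = v (of_nat p)"
  have q: "0 \<le> q" "q < 1" unfolding q_def using p_props(2) by auto
  have pm: "p - 1 > 0" using p_ge2 by simp
  obtain B where B: "\<rho> < B" "q * B ^ (p - 1) \<le> \<rho> ^ (p - 1)"
  proof (cases "q = 0")
    case True thus ?thesis using that[of "\<rho> + 1"] \<rho> by simp
  next
    case False
    hence qp: "q > 0" using q by simp
    define r where "r = root (p - 1) q"
    have r: "0 < r" "r < 1" unfolding r_def using real_root_gt_zero[OF pm qp] q(2) pm by auto
    have rp: "r ^ (p - 1) = q" unfolding r_def using real_root_pow_pos[OF pm qp] .
    show ?thesis
    proof (rule that[of "\<rho> / r"])
      show "\<rho> < \<rho> / r" using r \<rho> by (simp add: less_divide_eq)
      have "q * (\<rho> / r) ^ (p - 1) = \<rho> ^ (p - 1)" using rp qp by (simp add: power_divide)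
      thus "q * (\<rho> / r) ^ (p - 1) \<le> \<rho> ^ (p - 1)" by simp
    qed
  qed
  obtain a where a: "a \<in> K" "v (w - a) < \<rho> + (B - \<rho>)" using d_approx[of "B - \<rho>" w] B(1) unfolding \<rho>_def by auto
  define u where "u = w - a"
  have uK: "u \<notin> K" unfolding u_def using assms a(1) Kadd by (metis diff_add_cancel)
  have du: "d u = \<rho>" unfolding u_def \<rho>_def using d_add_K[OF Kuminus[OF a(1)], of w] by simp
  define s0 where "s0 = v u"
  have s0B: "s0 < B" unfolding s0_def u_def using a by simp
  have s0r: "\<rho> < s0" unfolding s0_def using nonattain[OF uK K0] du by simp
  have key0: "q * s0 ^ (p - 1) \<le> \<rho> ^ (p - 1)"
  proof -
    have "s0 ^ (p - 1) \<le> B ^ (p - 1)" using s0B s0r \<rho> by (intro power_mono) auto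
    hence "q * s0 ^ (p - 1) \<le> q * B ^ (p - 1)" using q by (intro mult_left_mono) auto
    thus ?thesis using B(2) by simp
  qed
  have "d (u ^ p) = \<rho> ^ p"
  proof (rule d_eqI)
    fix b assume "b \<in> K"
    thus "\<rho> ^ p \<le> v (u ^ p - b)" using powp_lower[OF K0 \<open>b \<in> K\<close>, of u] du by simp
  next
    fix e :: real assume e: "e > 0"
    have "((\<lambda>h. (\<rho> + h) ^ p) \<longlongrightarrow> (\<rho> + 0) ^ p) (at_right 0)" by (intro tendsto_intros)
    hence "eventually (\<lambda>h. (\<rho> + h) ^ p < \<rho> ^ p + e) (at_right 0)"
      using e by (intro order_tendstoD(2)) auto
    then obtain h where h: "h > 0" "\<And>y. y > 0 \<Longrightarrow> y < h \<Longrightarrow> (\<rho> + y) ^ p < \<rho> ^ p + e"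
      unfolding eventually_at_right_field by auto
    define h' where "h' = min h (s0 - \<rho>)"
    have h': "h' > 0" unfolding h'_def using h s0r by simp
    obtain a' where a': "a' \<in> K" "v (u - a') < \<rho> + h'" using d_approx[OF h', of u] du by auto
    define s where "s = v (u - a')"
    have sr: "\<rho> < s" unfolding s_def using nonattain[OF uK a'(1)] du by simp
    have ss0: "s \<le> s0" "s < \<rho> + h" using a'(2) unfolding s_def h'_def by auto
    have va': "v a' \<le> s0"
    proof -
      have "v a' = v (u - (u - a'))" by simp
      also have "\<dots> \<le> max (v u) (v (u - a'))" by (rule v_diff)
      finally show ?thesis using ss0 unfolding s0_def s_def by simp
    qed
    have key: "q * s0 ^ (p - 1) \<le> s ^ (p - 1)"
      using key0 power_mono[of \<rho> s "p - 1"] sr \<rho> by simp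
    have "v ((a' + (u - a')) ^ p - a' ^ p) \<le> s ^ p"
      by (rule binom_bound[OF _ va' ss0(1)]) (use key in \<open>simp_all add: s_def q_def\<close>)
    hence "v (u ^ p - a' ^ p) \<le> s ^ p" by simp
    also have "s ^ p = (\<rho> + (s - \<rho>)) ^ p" by simp
    also have "\<dots> < \<rho> ^ p + e" using h(2)[of "s - \<rho>"] sr ss0 by simp
    finally show "\<exists>b\<in>K. v (u ^ p - b) < \<rho> ^ p + e" using Kpower[OF a'(1)] by blast
  qed
  thus ?thesis using uK du unfolding \<rho>_def by blast
qed

end



context vf3
begin

lemma sim_d: assumes "x \<notin> K" "x' \<notin> K" "sim_rel v K x x'" shows "\<exists>l\<in>K. l \<noteq> 0 \<and> d x' = v l * d x"
proof -
  obtain l m where lm: "l \<in> K" "m \<in> K" "v (l * x + m - x') \<le> d x'"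
    using assms(3) unfolding sim_rel_def d_def by blast
  have eqs: "v (l * x + m - a) = v (x' - a)" if "a \<in> K" for a
  proof -
    have "d x' < v (x' - a)" using nonattain[OF assms(2) that] .
    hence "v (l * x + m - x') < v (x' - a)" using lm(3) by simp
    hence "v ((x' - a) + (l * x + m - x')) = v (x' - a)" by (rule v_iso)
    thus ?thesis by (simp add: algebra_simps)
  qed
  have "d (l * x + m) = d x'"
  proof (rule d_eqI)
    fix a assume "a \<in> K" thus "d x' \<le> v (l * x + m - a)" using eqs d_le by simp
  next
    fix e :: real assume "e > 0"
    then obtain a where "a \<in> K" "v (x' - a) < d x' + e" using d_approx by blast
    thus "\<exists>a\<in>K. v (l * x + m - a) < d x' + e" using eqs by auto
  qed
  hence "d x' = v l * d x" using d_add_K[OF lm(2)] d_scale[OF lm(1)] by simp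
  moreover have "l \<noteq> 0"
  proof
    assume "l = 0"
    hence "v (x' - m) \<le> d x'" using lm(3) v_sym[of m x'] by simp
    thus False using nonattain[OF assms(2) lm(2)] by simp
  qed
  ultimately show ?thesis using lm(1) by blast
qed

lemma residue_new: assumes "finite F" "F \<subseteq> {c \<in> K. v c \<le> 1}"
  shows "\<exists>c\<in>K. v c \<le> 1 \<and> (\<forall>f\<in>F. 1 \<le> v (c - f))"
proof (cases "F = {}")
  case True thus ?thesis using K0 by (intro bexI[of _ 0]) auto
next
  case False
  define Q where "Q = (\<Prod>f\<in>F. [:-f, 1:])"
  define P where "P = 1 + Q"
  have FK: "f \<in> K" "v f \<le> 1" if "f \<in> F" for f using assms(2) that by auto
  have "inK Q" unfolding Q_def by (intro inK_prod) (simp add: FK Kuminus K1)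
  hence "inK P" unfolding P_def by (intro inK_add) auto
  have "degree Q = card F" unfolding Q_def by (subst degree_prod_eq_sum_degree) auto
  hence dQ: "degree Q > 0" using False assms(1) by (simp add: card_gt_0_iff)
  hence "degree P > 0" unfolding P_def by (subst degree_add_eq_right) auto
  then obtain x where x: "x \<in> K" "poly P x = 0" using root_ex \<open>inK P\<close> by blast
  have px: "(\<Prod>f\<in>F. (x - f)) = -1"
    using x(2) unfolding P_def Q_def poly_add poly_prod by (simp add: add_eq_0_iff algebra_simps)
  hence vp: "(\<Prod>f\<in>F. v (x - f)) = 1" using v_prod[of "\<lambda>f. x - f" F] by simp
  have vx: "v x \<le> 1"
  proof (rule ccontr)
    assume nx: "\<not> v x \<le> 1"
    hence "v (x - f) = v x" if "f \<in> F" for f using v_iso[of "-f" x] FK[OF that] by simp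
    hence "(\<Prod>f\<in>F. v (x - f)) = v x ^ card F" by simp
    moreover have "v x ^ card F > 1" using nx False assms(1) by (simp add: card_gt_0_iff)
    ultimately show False using vp by simp
  qed
  have le1: "v (x - f) \<le> 1" if "f \<in> F" for f using v_diff[of x f] vx FK[OF that] by simp
  have "1 \<le> v (x - f)" if f: "f \<in> F" for f
  proof (rule ccontr)
    assume nf: "\<not> 1 \<le> v (x - f)"
    have "(\<Prod>f\<in>F. v (x - f)) = v (x - f) * (\<Prod>g\<in>F - {f}. v (x - g))"
      using f assms(1) by (simp add: prod.remove)
    also have "\<dots> \<le> v (x - f) * 1" using le1 by (intro mult_left_mono prod_le_1) auto
    also have "\<dots> < 1" using nf by simp
    finally show False using vp by simp
  qed
  thus ?thesis using x(1) vx by blast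
qed

lemma residue_sets: "\<exists>S. finite S \<and> card S = n \<and> S \<subseteq> {c \<in> K. v c \<le> 1} \<and> (\<forall>c\<in>S. \<forall>c'\<in>S. c \<noteq> c' \<longrightarrow> 1 \<le> v (c - c'))"
proof (induct n)
  case 0 show ?case by (intro exI[of _ "{}"]) auto
next
  case (Suc n)
  then obtain S where S: "finite S" "card S = n" "S \<subseteq> {c \<in> K. v c \<le> 1}" "\<forall>c\<in>S. \<forall>c'\<in>S. c \<noteq> c' \<longrightarrow> 1 \<le> v (c - c')"
    by blast
  obtain c where c: "c \<in> K" "v c \<le> 1" "\<forall>f\<in>S. 1 \<le> v (c - f)" using residue_new[OF S(1,3)] by blast
  have "c \<notin> S" using c(3) by force
  show ?case
  proof (intro exI[of _ "insert c S"] conjI)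
    show "card (insert c S) = Suc n" using S(1,2) \<open>c \<notin> S\<close> by simp
    show "\<forall>a\<in>insert c S. \<forall>b\<in>insert c S. a \<noteq> b \<longrightarrow> 1 \<le> v (a - b)"
      using S(4) c(3) v_sym by auto
  qed (use S c in auto)
qed

end



context vf3
begin

definition R where "R = {(x, y). x \<in> UNIV - K \<and> y \<in> UNIV - K \<and> sim_rel v K x y}"
definition cls where "cls x = R `` {x}"

lemma sim_refl: "sim_rel v K x x"
  unfolding sim_rel_def using K0 K1 d_nonneg[of x] unfolding d_def by (intro bexI[of _ 1] bexI[of _ 0]) auto

lemma cls_in: "x \<notin> K \<Longrightarrow> cls x \<in> (UNIV - K) // R"
  unfolding cls_def by (rule quotientI) auto

lemma cls_eq: "x \<notin> K \<Longrightarrow> y \<notin> K \<Longrightarrow> cls x = cls y \<Longrightarrow> (x, y) \<in> R"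
proof -
  assume a: "x \<notin> K" "y \<notin> K" "cls x = cls y"
  have "y \<in> cls y" unfolding cls_def R_def using a sim_refl by auto
  thus ?thesis using a(3) unfolding cls_def by auto
qed

lemma dK_notin: "d x > 0 \<Longrightarrow> x \<notin> K" using d_K by force

lemma case1:
  assumes uK: "u \<notin> K" and du: "d u = \<rho>" and dz: "d (u ^ p) = \<rho> ^ p" and h: "h \<in> K" "v h = \<rho>"
  shows "infinite ((UNIV - K) // R)"
proof
  assume fin: "finite ((UNIV - K) // R)"
  have \<rho>: "\<rho> > 0" using d_pos[OF uK] du by simp
  define g where "g = h ^ (p - 1)"
  have gK: "g \<in> K" unfolding g_def using h Kpower by blast
  define \<delta> where "\<delta> = \<rho> ^ p"
  have \<delta>: "\<delta> > 0" unfolding \<delta>_def using \<rho> by simp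
  define y where "y = g * u"
  define z where "z = u ^ p"
  have pm: "\<rho> ^ (p - 1) * \<rho> = \<rho> ^ p" using p_ge2 by (intro power_minus_mult) simp
  have vg: "v g * \<rho> = \<delta>" unfolding g_def \<delta>_def using h pm by (simp add: v_power)
  have dy: "d y = \<delta>" unfolding y_def using d_scale[OF gK, of u] du vg by simp
  have dzd: "d z = \<delta>" unfolding z_def \<delta>_def using dz .
  have A: "\<delta> \<le> d (z - l * y)" if "l \<in> K" for l
    using powp_d[OF Kmult[OF that gK], of u] du unfolding z_def y_def \<delta>_def by (simp add: mult.assoc)
  define x where "x c = z + c * y" for c
  have dx_ge: "\<delta> \<le> d (x c)" if "c \<in> K" for c using A[OF Kuminus[OF that]] unfolding x_def by simp
  have xK: "x c \<notin> K" if "c \<in> K" for c using dx_ge[OF that] \<delta> by (intro dK_notin) simp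
  have dx_le: "d (x c) \<le> \<delta>" if "c \<in> K" "v c \<le> 1" for c
  proof -
    have "d (x c) \<le> max (d z) (d (c * y))" unfolding x_def by (rule d_sum)
    also have "d (c * y) = v c * \<delta>" using d_scale[OF that(1)] dy by simp
    also have "\<dots> \<le> \<delta>" using that(2) \<delta> by (simp add: mult_left_le_one_le)
    finally show ?thesis using dzd by simp
  qed
  have claim: "(x c, x c') \<notin> R" if c: "c \<in> K" "v c \<le> 1" "c' \<in> K" "v c' \<le> 1" "1 \<le> v (c - c')" for c c'
  proof
    assume "(x c, x c') \<in> R"
    then obtain l m where lm: "l \<in> K" "m \<in> K" "v (l * x c + m - x c') \<le> d (x c')"
      unfolding R_def sim_rel_def d_def by blast
    define w where "w = l * x c - x c'"
    define \<beta> where "\<beta> = l - 1"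
    define \<alpha> where "\<alpha> = l * c - c'"
    have \<beta>K: "\<beta> \<in> K" unfolding \<beta>_def using lm(1) K1 Kdiff by blast
    have \<alpha>K: "\<alpha> \<in> K" unfolding \<alpha>_def using lm(1) c Kdiff Kmult by blast
    have weq: "w = \<beta> * z + \<alpha> * y" unfolding w_def \<beta>_def \<alpha>_def x_def by (simp add: algebra_simps)
    have vwm: "v (w - (- m)) \<le> \<delta>" using lm(3) dx_le[OF c(3,4)] unfolding w_def by (simp add: algebra_simps)
    have vb: "v \<beta> < 1"
    proof (cases "\<beta> = 0")
      case False
      have "w = \<beta> * (z - (- (\<alpha> / \<beta>)) * y)" using False unfolding weq by (simp add: field_simps)
      hence "d w = v \<beta> * d (z - (- (\<alpha> / \<beta>)) * y)" using d_scale[OF \<beta>K] by simp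
      moreover have "\<delta> \<le> d (z - (- (\<alpha> / \<beta>)) * y)" using A[OF Kuminus[OF Kdivide[OF \<alpha>K \<beta>K]]] .
      ultimately have dw: "v \<beta> * \<delta> \<le> d w" by (simp add: mult_left_mono)
      have "v \<beta> * \<delta> > 0" using v_pos[OF False] \<delta> by (rule mult_pos_pos)
      hence "d w > 0" using dw by linarith
      hence "w \<notin> K" by (rule dK_notin)
      hence "d w < v (w - (- m))" using nonattain Kuminus[OF lm(2)] by blast
      hence "v \<beta> * \<delta> < \<delta>" using dw vwm by simp
      thus ?thesis using \<delta> by simp
    qed simp
    have va: "1 \<le> v \<alpha>"
    proof -
      have "\<alpha> = (c - c') + \<beta> * c" unfolding \<alpha>_def \<beta>_def by (simp add: algebra_simps)
      moreover have "v (\<beta> * c) < v (c - c')"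
      proof -
        have "v \<beta> * v c \<le> v \<beta>" using c(2) v_nonneg[of \<beta>] by (simp add: mult_left_le)
        thus ?thesis using vb c(5) by (simp add: v_mult)
      qed
      ultimately show ?thesis using v_iso c(5) by simp
    qed
    have "\<delta> \<le> d w"
    proof (rule ccontr)
      assume "\<not> \<delta> \<le> d w"
      have "d (\<alpha> * y) = v \<alpha> * \<delta>" using d_scale[OF \<alpha>K] dy by simp
      hence "\<delta> \<le> d (\<alpha> * y)" using va \<delta> by simp
      moreover have "d (\<beta> * z) = v \<beta> * \<delta>" using d_scale[OF \<beta>K] dzd by simp
      hence "d (\<beta> * z) < \<delta>" using vb \<delta> by simp
      moreover have "d (\<alpha> * y) \<le> max (d w) (d (\<beta> * z))" using d_diff[of w "\<beta> * z"] weq by simp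
      ultimately show False using \<open>\<not> \<delta> \<le> d w\<close> by simp
    qed
    hence "w \<notin> K" using \<delta> by (intro dK_notin) simp
    hence "d w < v (w - (- m))" using nonattain Kuminus[OF lm(2)] by blast
    thus False using vwm \<open>\<delta> \<le> d w\<close> by simp
  qed
  obtain S where S: "finite S" "card S = Suc (card ((UNIV - K) // R))" "S \<subseteq> {c \<in> K. v c \<le> 1}"
    "\<forall>c\<in>S. \<forall>c'\<in>S. c \<noteq> c' \<longrightarrow> 1 \<le> v (c - c')" using residue_sets by blast
  have "inj_on (\<lambda>c. cls (x c)) S"
  proof (rule inj_onI)
    fix c c' assume cc: "c \<in> S" "c' \<in> S" "cls (x c) = cls (x c')"
    show "c = c'"
    proof (rule ccontr)
      assume "c \<noteq> c'"
      moreover have "c \<in> K" "v c \<le> 1" "c' \<in> K" "v c' \<le> 1" using S(3) cc(1,2) by auto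
      moreover have "1 \<le> v (c - c')" using S(4) cc(1,2) \<open>c \<noteq> c'\<close> by blast
      ultimately have "(x c, x c') \<notin> R" using claim by blast
      thus False using cls_eq[OF xK xK cc(3)] S(3) cc by auto
    qed
  qed
  moreover have "(\<lambda>c. cls (x c)) ` S \<subseteq> (UNIV - K) // R" using S(3) cls_in xK by auto
  ultimately have "card S \<le> card ((UNIV - K) // R)" using fin by (rule card_inj_on_le)
  thus False using S(2) by simp
qed


lemma case2:
  assumes uK: "u \<notin> K" and du: "d u = \<rho>" and noh: "\<not> (\<exists>h\<in>K. v h = \<rho>)"
  shows "infinite ((UNIV - K) // R)"
proof -
  have \<rho>: "\<rho> > 0" using d_pos[OF uK] du by simp
  define T where "T x = (SOME u. u \<notin> K \<and> d u = d x \<and> d (u ^ p) = d x ^ p)" for x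
  have T: "T x \<notin> K \<and> d (T x) = d x \<and> d (T x ^ p) = d x ^ p" if "x \<notin> K" for x
    unfolding T_def using S_lemma[OF that] by (rule someI_ex)
  define W where "W = rec_nat u (\<lambda>_ w. T w ^ p)"
  have W0: "W 0 = u" and WS: "W (Suc n) = T (W n) ^ p" for n unfolding W_def by simp_all
  have Wp: "W n \<notin> K \<and> d (W n) = \<rho> ^ (p ^ n)" for n
  proof (induct n)
    case 0 thus ?case using W0 uK du by simp
  next
    case (Suc n)
    have pw: "(\<rho> ^ (p ^ n)) ^ p = \<rho> ^ (p ^ Suc n)" by (metis power_Suc2 power_mult)
    have "d (W (Suc n)) = \<rho> ^ (p ^ Suc n)" using T[of "W n"] WS Suc pw by simp
    moreover from this have "W (Suc n) \<notin> K" using \<rho> by (intro dK_notin) simp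
    ultimately show ?case by simp
  qed
  have noR: "(W n, W m) \<notin> R" if "n < m" for n m
  proof
    assume "(W n, W m) \<in> R"
    hence "sim_rel v K (W n) (W m)" unfolding R_def by simp
    then obtain l where l: "l \<in> K" "l \<noteq> 0" "\<rho> ^ (p ^ m) = v l * \<rho> ^ (p ^ n)"
      using sim_d[OF conjunct1[OF Wp[of n]] conjunct1[OF Wp[of m]]] Wp[of n] Wp[of m] by auto
    define N where "N = p ^ m - p ^ n"
    have "p ^ n < p ^ m" using p_ge2 by (intro power_strict_increasing[OF that]) simp
    hence N: "N > 0" "p ^ m = p ^ n + N" unfolding N_def by simp_all
    have "\<rho> ^ (p ^ m) = \<rho> ^ N * \<rho> ^ (p ^ n)" by (simp only: N(2) power_add mult.commute)
    hence "v l * \<rho> ^ (p ^ n) = \<rho> ^ N * \<rho> ^ (p ^ n)" using l(3) by simp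
    moreover have "\<rho> ^ (p ^ n) \<noteq> 0" using \<rho> by simp
    ultimately have vl: "v l = \<rho> ^ N" by (rule mult_right_cancel[THEN iffD1, rotated])
    obtain h where h: "h \<in> K" "h ^ N = l" using root_N[OF N(1) l(1)] by blast
    have "v h ^ N = \<rho> ^ N" using h(2) vl v_power[of h N] by simp
    hence "v h = \<rho>" by (rule power_eq_imp_eq_base) (use N(1) \<rho> in auto)
    thus False using noh h(1) by blast
  qed
  have inj: "inj (\<lambda>n. cls (W n))"
  proof (rule injI)
    fix n m assume e: "cls (W n) = cls (W m)"
    show "n = m"
    proof (rule ccontr)
      assume "n \<noteq> m"
      hence "n < m \<or> m < n" by auto
      moreover have "(W n, W m) \<in> R" using cls_eq[OF conjunct1[OF Wp[of n]] conjunct1[OF Wp[of m]] e] .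
      moreover have "(W m, W n) \<in> R" using cls_eq[OF conjunct1[OF Wp[of m]] conjunct1[OF Wp[of n]] e[symmetric]] .
      ultimately show False using noR by blast
    qed
  qed
  have sub: "range (\<lambda>n. cls (W n)) \<subseteq> (UNIV - K) // R" using cls_in Wp by auto
  show ?thesis
  proof
    assume "finite ((UNIV - K) // R)"
    hence "finite (range (\<lambda>n. cls (W n)))" using sub finite_subset by blast
    hence "finite (UNIV :: nat set)" using inj finite_imageD by blast
    thus False by simp
  qed
qed

lemma main_vf3: assumes "K \<noteq> UNIV" shows "infinite ((UNIV - K) // R)"
proof -
  obtain y where "y \<notin> K" using assms by blast
  then obtain u where u: "u \<notin> K" "d u = d y" "d (u ^ p) = d y ^ p" using S_lemma by blast
  show ?thesis
  proof (cases "\<exists>h\<in>K. v h = d y")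
    case True
    then obtain h where "h \<in> K" "v h = d y" by blast
    thus ?thesis by (rule case1[OF u])
  next
    case False
    thus ?thesis by (rule case2[OF u(1,2)])
  qed
qed

end

theorem mainTheorem5:
  fixes v :: "'b::field \<Rightarrow> real" and K :: "'b set"
  assumes "nonarch_abs v"
    and "subfield K"
    and "vcomplete v K"
    and "nontrivially_valued v K"
    and "\<not> spherically_complete v K"
    and "spherically_complete v UNIV"
    and "immediate_ext v K"
    and "alg_closed_subfield K"
    and "residue_char v > 0"
  shows "infinite ((UNIV - K) // {(x, y). x \<in> UNIV - K \<and> y \<in> UNIV - K \<and> sim_rel v K x y})"
proof -
  interpret vf3 v K using assms by unfold_locales auto
  have "K \<noteq> UNIV" using assms(5,6) by auto
  from main_vf3[OF this] show ?thesis unfolding R_def .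
qed

end
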